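(* If a polynomial $p\in\mathbb C[X_{12},X_{13},X_{23}]$ satisfies $\hat H_1^{(-2)}p=\hat H_2^{(-2)}p=\hat H_3^{(-2)}p=0$, then $p$ is constant. That is, $\ker\hat H_1^{(-2)}\cap\ker\hat H_2^{(-2)}\cap\ker\hat H_3^{(-2)}=\mathbb C$ on $\mathbb C[X_{12},X_{13},X_{23}]$.
   Context: The operators (with rational coefficients, mapping polynomials to rational functions) are $$\hat H_1^{(-2)}=\frac{\partial^2}{\partial X_{12}^2}+\frac{\partial^2}{\partial X_{13}^2}+\frac{X_{12}^2+X_{13}^2-X_{23}^2}{X_{12}X_{13}}\frac{\partial^2}{\partial X_{12}\partial X_{13}}+\frac{2}{X_{12}}\frac{\partial}{\partial X_{12}}+\frac{2}{X_{13}}\frac{\partial}{\partial X_{13}},$$ $$\hat H_2^{(-2)}=\frac{\partial^2}{\partial X_{12}^2}+\frac{\partial^2}{\partial X_{23}^2}+\frac{X_{12}^2+X_{23}^2-X_{13}^2}{X_{12}X_{23}}\frac{\partial^2}{\partial X_{12}\partial X_{23}}+\frac{2}{X_{12}}\frac{\partial}{\partial X_{12}}+\frac{2}{X_{23}}\frac{\partial}{\partial X_{23}},$$ $$\hat H_3^{(-2)}=\frac{\partial^2}{\partial X_{13}^2}+\frac{\partial^2}{\partial X_{23}^2}+\frac{X_{13}^2+X_{23}^2-X_{12}^2}{X_{13}X_{23}}\frac{\partial^2}{\partial X_{13}\partial X_{23}}+\frac{2}{X_{13}}\frac{\partial}{\partial X_{13}}+\frac{2}{X_{23}}\frac{\partial}{\partial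 X_{23}}.$$ *)

theory Defs
  imports Complex_Main
begin

text \<open>A polynomial in C[X12,X13,X23] is represented by its coefficient function
  on exponent triples (i,j,k) (monomial X12^i X13^j X23^k), with finite support.\<close>

type_synonym mpoly3 = "nat \<times> nat \<times> nat \<Rightarrow> complex"

definition is_poly3 :: "mpoly3 \<Rightarrow> bool" where
  "is_poly3 c \<longleftrightarrow> finite {m. c m \<noteq> 0}"

definition eval3 :: "mpoly3 \<Rightarrow> complex \<Rightarrow> complex \<Rightarrow> complex \<Rightarrow> complex" where
  "eval3 c x12 x13 x23 =
     (\<Sum>m\<in>{m. c m \<noteq> 0}. c m * x12 ^ fst m * x13 ^ fst (snd m) * x23 ^ snd (snd m))"

definition d12 :: "mpoly3 \<Rightarrow> mpoly3" where
  "d12 c = (\<lambda>(i,j,k). of_nat (Suc i) * c (Suc i, j, k))"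
definition d13 :: "mpoly3 \<Rightarrow> mpoly3" where
  "d13 c = (\<lambda>(i,j,k). of_nat (Suc j) * c (i, Suc j, k))"
definition d23 :: "mpoly3 \<Rightarrow> mpoly3" where
  "d23 c = (\<lambda>(i,j,k). of_nat (Suc k) * c (i, j, Suc k))"

definition H1 :: "mpoly3 \<Rightarrow> complex \<Rightarrow> complex \<Rightarrow> complex \<Rightarrow> complex" where
  "H1 p x12 x13 x23 =
     eval3 (d12 (d12 p)) x12 x13 x23 + eval3 (d13 (d13 p)) x12 x13 x23
     + (x12^2 + x13^2 - x23^2) / (x12 * x13) * eval3 (d12 (d13 p)) x12 x13 x23
     + 2 / x12 * eval3 (d12 p) x12 x13 x23 + 2 / x13 * eval3 (d13 p) x12 x13 x23"

definition H2 :: "mpoly3 \<Rightarrow> complex \<Rightarrow> complex \<Rightarrow> complex \<Rightarrow> complex" where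
  "H2 p x12 x13 x23 =
     eval3 (d12 (d12 p)) x12 x13 x23 + eval3 (d23 (d23 p)) x12 x13 x23
     + (x12^2 + x23^2 - x13^2) / (x12 * x23) * eval3 (d12 (d23 p)) x12 x13 x23
     + 2 / x12 * eval3 (d12 p) x12 x13 x23 + 2 / x23 * eval3 (d23 p) x12 x13 x23"

definition H3 :: "mpoly3 \<Rightarrow> complex \<Rightarrow> complex \<Rightarrow> complex \<Rightarrow> complex" where
  "H3 p x12 x13 x23 =
     eval3 (d13 (d13 p)) x12 x13 x23 + eval3 (d23 (d23 p)) x12 x13 x23
     + (x13^2 + x23^2 - x12^2) / (x13 * x23) * eval3 (d13 (d23 p)) x12 x13 x23
     + 2 / x13 * eval3 (d13 p) x12 x13 x23 + 2 / x23 * eval3 (d23 p) x12 x13 x23"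

definition is_const3 :: "mpoly3 \<Rightarrow> bool" where
  "is_const3 c \<longleftrightarrow> (\<forall>m. m \<noteq> (0,0,0) \<longrightarrow> c m = 0)"

end

theory Submission
  imports Defs
begin


lemma poly1_zero:
  fixes c :: "nat \<Rightarrow> complex"
  assumes "\<And>x. x \<noteq> 0 \<Longrightarrow> (\<Sum>i\<le>n. c i * x^i) = 0"
  shows "\<forall>i\<le>n. c i = 0"
proof (rule ccontr)
  assume "\<not> (\<forall>i\<le>n. c i = 0)"
  then have "finite {x. (\<Sum>i\<le>n. c i * x^i) = 0}" using polyfun_finite_roots by blast
  moreover have "UNIV - {0} \<subseteq> {x. (\<Sum>i\<le>n. c i * x^i) = 0}" using assms by auto
  ultimately have "finite (UNIV - {0::complex})" using finite_subset by blast
  then show False using infinite_UNIV_char_0[where 'a=complex] by simp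
qed

definition box :: "nat \<Rightarrow> (nat \<times> nat \<times> nat) set" where
  "box N = {..N} \<times> {..N} \<times> {..N}"

definition mon3 :: "nat \<times> nat \<times> nat \<Rightarrow> complex \<Rightarrow> complex \<Rightarrow> complex \<Rightarrow> complex" where
  "mon3 m x y z = x ^ fst m * y ^ fst (snd m) * z ^ snd (snd m)"

definition ev :: "nat \<Rightarrow> mpoly3 \<Rightarrow> complex \<Rightarrow> complex \<Rightarrow> complex \<Rightarrow> complex" where
  "ev N f x y z = (\<Sum>m\<in>box N. f m * mon3 m x y z)"

definition supp_in :: "nat \<Rightarrow> mpoly3 \<Rightarrow> bool" where
  "supp_in N f \<longleftrightarrow> (\<forall>m. f m \<noteq> 0 \<longrightarrow> m \<in> box N)"

definition sh :: "mpoly3 \<Rightarrow> nat \<Rightarrow> nat \<Rightarrow> nat \<Rightarrow> mpoly3" where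
  "sh f a b c = (\<lambda>(i,j,k). if a \<le> i \<and> b \<le> j \<and> c \<le> k then f (i-a, j-b, k-c) else 0)"

lemma finite_box[simp]: "finite (box N)" by (simp add: box_def)

lemma eval3_ev:
  assumes "supp_in N c"
  shows "eval3 c x y z = ev N c x y z"
proof -
  have "eval3 c x y z = (\<Sum>m\<in>{m. c m \<noteq> 0}. c m * mon3 m x y z)"
    unfolding eval3_def mon3_def by (simp add: mult.assoc)
  also have "\<dots> = ev N c x y z"
    unfolding ev_def
    by (rule sum.mono_neutral_left) (use assms in \<open>auto simp: supp_in_def\<close>)
  finally show ?thesis .
qed

lemma ev_nested:
  "ev N g x y z = (\<Sum>i\<le>N. (\<Sum>j\<le>N. (\<Sum>k\<le>N. g (i,j,k) * z^k) * y^j) * x^i)"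
proof -
  have "ev N g x y z = (\<Sum>i\<le>N. \<Sum>j\<le>N. \<Sum>k\<le>N. g (i,j,k) * (x^i * y^j * z^k))"
    unfolding ev_def box_def mon3_def by (simp add: sum.cartesian_product split_def)
  also have "\<dots> = (\<Sum>i\<le>N. (\<Sum>j\<le>N. (\<Sum>k\<le>N. g (i,j,k) * z^k) * y^j) * x^i)"
    by (simp add: sum_distrib_left sum_distrib_right mult_ac)
  finally show ?thesis .
qed

lemma ev_ident:
  assumes "\<And>x y z. x \<noteq> 0 \<Longrightarrow> y \<noteq> 0 \<Longrightarrow> z \<noteq> 0 \<Longrightarrow> ev N g x y z = 0"
  shows "\<forall>m\<in>box N. g m = 0"
proof -
  have A: "\<forall>i\<le>N. (\<Sum>j\<le>N. (\<Sum>k\<le>N. g (i,j,k) * z^k) * y^j) = 0" if "y \<noteq> 0" "z \<noteq> 0" for y z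
    by (rule poly1_zero) (use assms that in \<open>auto simp: ev_nested\<close>)
  have B: "\<forall>j\<le>N. (\<Sum>k\<le>N. g (i,j,k) * z^k) = 0" if "z \<noteq> 0" "i \<le> N" for i z
    by (rule poly1_zero) (use A that in auto)
  have C: "\<forall>k\<le>N. g (i,j,k) = 0" if "i \<le> N" "j \<le> N" for i j
    by (rule poly1_zero) (use B that in auto)
  show ?thesis using C by (auto simp: box_def)
qed

lemma ev_ext:
  assumes "supp_in N f" "N \<le> M"
  shows "ev M f x y z = ev N f x y z"
  unfolding ev_def
  by (rule sum.mono_neutral_right) (use assms in \<open>auto simp: supp_in_def box_def\<close>)

lemma ev_shift:
  assumes "supp_in N f" "N + a \<le> M" "N + b \<le> M" "N + c \<le> M"
  shows "x^a * y^b * z^c * ev N f x y z = ev M (sh f a b c) x y z"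
proof -
  let ?t = "\<lambda>(i::nat,j::nat,k::nat). (i+a, j+b, k+c)"
  have inj: "inj_on ?t (box N)" by (auto simp: inj_on_def)
  have sub: "?t ` box N \<subseteq> box M" using assms(2-4) by (auto simp: box_def)
  have "ev M (sh f a b c) x y z = (\<Sum>m\<in>?t ` box N. sh f a b c m * mon3 m x y z)"
    unfolding ev_def
  proof (rule sum.mono_neutral_right)
    show "\<forall>m\<in>box M - ?t ` box N. sh f a b c m * mon3 m x y z = 0"
    proof
      fix m assume m: "m \<in> box M - ?t ` box N"
      obtain i j k where mi: "m = (i,j,k)" by (cases m) auto
      show "sh f a b c m * mon3 m x y z = 0"
      proof (cases "a \<le> i \<and> b \<le> j \<and> c \<le> k")
        case True
        have "(i-a,j-b,k-c) \<notin> box N"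
        proof
          assume "(i-a,j-b,k-c) \<in> box N"
          then have "?t (i-a,j-b,k-c) \<in> ?t ` box N" by blast
          with True m mi show False by simp
        qed
        then have "f (i-a,j-b,k-c) = 0" using assms(1) by (auto simp: supp_in_def)
        then show ?thesis by (simp add: sh_def mi)
      qed (auto simp add: sh_def mi)
    qed
  qed (use sub in auto)
  also have "\<dots> = (\<Sum>m\<in>box N. sh f a b c (?t m) * mon3 (?t m) x y z)"
    by (subst sum.reindex[OF inj]) (simp add: comp_def)
  also have "\<dots> = (\<Sum>m\<in>box N. x^a * y^b * z^c * (f m * mon3 m x y z))"
    by (rule sum.cong) (auto simp: sh_def mon3_def power_add mult_ac)
  also have "\<dots> = x^a * y^b * z^c * ev N f x y z"
    by (simp add: ev_def sum_distrib_left)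
  finally show ?thesis by simp
qed

definition wt :: "(nat \<Rightarrow> nat \<Rightarrow> nat \<Rightarrow> complex) \<Rightarrow> mpoly3 \<Rightarrow> mpoly3" where
  "wt w p = (\<lambda>(i,j,k). w i j k * p (i,j,k))"

lemma supp_mono: "supp_in N f \<Longrightarrow> N \<le> M \<Longrightarrow> supp_in M f"
  unfolding supp_in_def box_def by (auto intro: order_trans)

lemma supp_d12: "supp_in N p \<Longrightarrow> supp_in N (d12 p)"
  unfolding supp_in_def box_def d12_def by (force split: prod.splits)
lemma supp_d13: "supp_in N p \<Longrightarrow> supp_in N (d13 p)"
  unfolding supp_in_def box_def d13_def by (force split: prod.splits)
lemma supp_d23: "supp_in N p \<Longrightarrow> supp_in N (d23 p)"
  unfolding supp_in_def box_def d23_def by (force split: prod.splits)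
lemma supp_wt: "supp_in N p \<Longrightarrow> supp_in N (wt w p)"
  unfolding supp_in_def box_def wt_def by (force split: prod.splits)
lemma supp_sh: "supp_in N f \<Longrightarrow> a \<le> 2 \<Longrightarrow> b \<le> 2 \<Longrightarrow> c \<le> 2 \<Longrightarrow> supp_in (N+2) (sh f a b c)"
  unfolding supp_in_def box_def sh_def by (force split: prod.splits if_splits)

lemma ev_wt_lin:
  "ev M (wt (\<lambda>i j k. w1 i j k + w2 i j k + 2 * w3 i j k) p) x y z
     = ev M (wt w1 p) x y z + ev M (wt w2 p) x y z + 2 * ev M (wt w3 p) x y z"
  unfolding ev_def wt_def
  by (simp add: sum.distrib sum_distrib_left split_def algebra_simps)

lemma ev_combo:
  "ev M (\<lambda>m. f m + g m - h m) x y z = ev M f x y z + ev M g x y z - ev M h x y z"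
  unfolding ev_def by (simp add: sum.distrib sum_subtractf algebra_simps)

lemma sh_d12: "sh (d12 p) 1 0 0 = wt (\<lambda>i j k. of_nat i) p"
  by (rule ext) (auto simp: sh_def wt_def d12_def split: prod.splits)
lemma sh_d13: "sh (d13 p) 0 1 0 = wt (\<lambda>i j k. of_nat j) p"
  by (rule ext) (auto simp: sh_def wt_def d13_def split: prod.splits)
lemma sh_d23: "sh (d23 p) 0 0 1 = wt (\<lambda>i j k. of_nat k) p"
  by (rule ext) (auto simp: sh_def wt_def d23_def split: prod.splits)
lemma sh_d12d13: "sh (d12 (d13 p)) 1 1 0 = wt (\<lambda>i j k. of_nat i * of_nat j) p"
  by (rule ext) (auto simp: sh_def wt_def d12_def d13_def split: prod.splits)
lemma sh_d12d23: "sh (d12 (d23 p)) 1 0 1 = wt (\<lambda>i j k. of_nat i * of_nat k) p"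
  by (rule ext) (auto simp: sh_def wt_def d12_def d23_def split: prod.splits)
lemma sh_d13d23: "sh (d13 (d23 p)) 0 1 1 = wt (\<lambda>i j k. of_nat j * of_nat k) p"
  by (rule ext) (auto simp: sh_def wt_def d13_def d23_def split: prod.splits)

lemma aux2: "(if 2 \<le> i then (of_nat (Suc (i - 2)) * of_nat (Suc (Suc (i - 2))) * q :: complex) else 0)
   = of_nat i * (of_nat i - 1) * q"
proof (cases "2 \<le> i")
  case True
  then obtain n where "i = Suc (Suc n)" by (metis add_2_eq_Suc le_Suc_ex)
  then show ?thesis by (simp add: algebra_simps)
next
  case False
  then have "i = 0 \<or> i = 1" by auto
  then show ?thesis by auto
qed

lemma sh_d12d12: "sh (d12 (d12 p)) 2 0 0 = wt (\<lambda>i j k. of_nat i * (of_nat i - 1)) p"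
proof (rule ext, clarsimp simp: wt_def split: prod.splits)
  fix i j k
  show "sh (d12 (d12 p)) 2 0 0 (i,j,k) = of_nat i * (of_nat i - 1) * p (i,j,k)"
  proof (cases "2 \<le> i")
    case True
    then obtain n where n: "i = Suc (Suc n)" by (metis add_2_eq_Suc le_Suc_ex)
    show ?thesis by (simp add: n sh_def d12_def algebra_simps)
  next
    case False
    then have "i = 0 \<or> i = 1" by auto
    then show ?thesis by (auto simp: sh_def)
  qed
qed

lemma sh_d13d13: "sh (d13 (d13 p)) 0 2 0 = wt (\<lambda>i j k. of_nat j * (of_nat j - 1)) p"
proof (rule ext, clarsimp simp: wt_def split: prod.splits)
  fix i j k
  show "sh (d13 (d13 p)) 0 2 0 (i,j,k) = of_nat j * (of_nat j - 1) * p (i,j,k)"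
  proof (cases "2 \<le> j")
    case True
    then obtain n where n: "j = Suc (Suc n)" by (metis add_2_eq_Suc le_Suc_ex)
    show ?thesis by (simp add: n sh_def d13_def algebra_simps)
  next
    case False
    then have "j = 0 \<or> j = 1" by auto
    then show ?thesis by (auto simp: sh_def)
  qed
qed

lemma sh_d23d23: "sh (d23 (d23 p)) 0 0 2 = wt (\<lambda>i j k. of_nat k * (of_nat k - 1)) p"
proof (rule ext, clarsimp simp: wt_def split: prod.splits)
  fix i j k
  show "sh (d23 (d23 p)) 0 0 2 (i,j,k) = of_nat k * (of_nat k - 1) * p (i,j,k)"
  proof (cases "2 \<le> k")
    case True
    then obtain n where n: "k = Suc (Suc n)" by (metis add_2_eq_Suc le_Suc_ex)
    show ?thesis by (simp add: n sh_def d23_def algebra_simps)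
  next
    case False
    then have "k = 0 \<or> k = 1" by auto
    then show ?thesis by (auto simp: sh_def)
  qed
qed

lemma eq1:
  assumes supp: "supp_in N p"
    and H: "\<And>x y z. x \<noteq> 0 \<Longrightarrow> y \<noteq> 0 \<Longrightarrow> H1 p x y z = 0"
  shows "sh (wt (\<lambda>i j k. of_nat i * (of_nat i + of_nat j + 1)) p) 0 2 0 m
       + sh (wt (\<lambda>i j k. of_nat j * (of_nat i + of_nat j + 1)) p) 2 0 0 m
       - sh (wt (\<lambda>i j k. of_nat i * of_nat j) p) 0 0 2 m = 0"
proof -
  define F where "F = wt (\<lambda>i j k. of_nat i * (of_nat i + of_nat j + 1)) p"
  define G where "G = wt (\<lambda>i j k. of_nat j * (of_nat i + of_nat j + 1)) p"
  define K where "K = wt (\<lambda>i j k. of_nat i * of_nat j) p"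
  define g where "g = (\<lambda>m. sh F 0 2 0 m + sh G 2 0 0 m - sh K 0 0 2 m)"
  have sF: "supp_in (N+2) F" "supp_in (N+2) G" "supp_in (N+2) K"
    unfolding F_def G_def K_def using supp_wt supp_mono supp by (meson le_add1)+
  have key: "ev (N+4) g x y z = 0" if x: "x \<noteq> 0" and y: "y \<noteq> 0" for x y z
  proof -
    let ?A = "eval3 (d12 (d12 p)) x y z" and ?B = "eval3 (d13 (d13 p)) x y z"
      and ?C = "eval3 (d12 (d13 p)) x y z" and ?D = "eval3 (d12 p) x y z"
      and ?E = "eval3 (d13 p) x y z"
    have e: "x^2 * y^2 * H1 p x y z = y^2 * (x^2 * ?A) + x^2 * (y^2 * ?B)
       + (x^2 + y^2 - z^2) * (x * y * ?C) + 2 * y^2 * (x * ?D) + 2 * x^2 * (y * ?E)"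
      using x y unfolding H1_def by (simp add: field_simps power2_eq_square)
    have sd: "supp_in N (d12 (d12 p))" "supp_in N (d13 (d13 p))" "supp_in N (d12 (d13 p))"
      "supp_in N (d12 p)" "supp_in N (d13 p)"
      using supp by (simp_all add: supp_d12 supp_d13)
    have A: "x^2 * ?A = ev (N+2) (wt (\<lambda>i j k. of_nat i * (of_nat i - 1)) p) x y z"
      using ev_shift[OF sd(1), of 2 "N+2" 0 0 x y z] unfolding sh_d12d12 eval3_ev[OF sd(1)] by simp
    have B: "y^2 * ?B = ev (N+2) (wt (\<lambda>i j k. of_nat j * (of_nat j - 1)) p) x y z"
      using ev_shift[OF sd(2), of 0 "N+2" 2 0 x y z] unfolding sh_d13d13 eval3_ev[OF sd(2)] by simp
    have C: "x * y * ?C = ev (N+2) (wt (\<lambda>i j k. of_nat i * of_nat j) p) x y z"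
      using ev_shift[OF sd(3), of 1 "N+2" 1 0 x y z] unfolding sh_d12d13 eval3_ev[OF sd(3)] by simp
    have D: "x * ?D = ev (N+2) (wt (\<lambda>i j k. of_nat i) p) x y z"
      using ev_shift[OF sd(4), of 1 "N+2" 0 0 x y z] unfolding sh_d12 eval3_ev[OF sd(4)] by simp
    have E: "y * ?E = ev (N+2) (wt (\<lambda>i j k. of_nat j) p) x y z"
      using ev_shift[OF sd(5), of 0 "N+2" 1 0 x y z] unfolding sh_d13 eval3_ev[OF sd(5)] by simp
    have F: "ev (N+2) F x y z = x^2 * ?A + x * y * ?C + 2 * (x * ?D)"
    proof -
      have "F = wt (\<lambda>i j k. of_nat i * (of_nat i - 1) + of_nat i * of_nat j + 2 * of_nat i) p"
        unfolding F_def by (rule arg_cong[where f="\<lambda>w. wt w p"]) (auto simp: fun_eq_iff algebra_simps)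
      then show ?thesis using A C D by (simp add: ev_wt_lin)
    qed
    have G: "ev (N+2) G x y z = y^2 * ?B + x * y * ?C + 2 * (y * ?E)"
    proof -
      have "G = wt (\<lambda>i j k. of_nat j * (of_nat j - 1) + of_nat i * of_nat j + 2 * of_nat j) p"
        unfolding G_def by (rule arg_cong[where f="\<lambda>w. wt w p"]) (auto simp: fun_eq_iff algebra_simps)
      then show ?thesis using B C E by (simp add: ev_wt_lin)
    qed
    have K: "ev (N+2) K x y z = x * y * ?C" using C by (simp add: K_def)
    have "ev (N+4) g x y z = ev (N+4) (sh F 0 2 0) x y z + ev (N+4) (sh G 2 0 0) x y z
        - ev (N+4) (sh K 0 0 2) x y z"
      unfolding g_def by (rule ev_combo)
    also have "\<dots> = y^2 * ev (N+2) F x y z + x^2 * ev (N+2) G x y z - z^2 * ev (N+2) K x y z"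
      using ev_shift[OF sF(1), of 0 "N+4" 2 0 x y z] ev_shift[OF sF(2), of 2 "N+4" 0 0 x y z]
        ev_shift[OF sF(3), of 0 "N+4" 0 2 x y z] by simp
    also have "\<dots> = x^2 * y^2 * H1 p x y z"
      unfolding e F G K by (simp add: algebra_simps)
    also have "\<dots> = 0" using H x y by simp
    finally show ?thesis .
  qed
  have inbox: "\<forall>m\<in>box (N+4). g m = 0"
    by (rule ev_ident) (use key in auto)
  have outbox: "g m = 0" if "m \<notin> box (N+4)" for m
  proof -
    have n4: "N + 2 + 2 = N + 4" by simp
    have s4: "supp_in (N+4) (sh F 0 2 0)" "supp_in (N+4) (sh G 2 0 0)" "supp_in (N+4) (sh K 0 0 2)"
      using supp_sh[OF sF(1), of 0 2 0] supp_sh[OF sF(2), of 2 0 0] supp_sh[OF sF(3), of 0 0 2]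
      unfolding n4 by simp_all
    then have "sh F 0 2 0 m = 0" "sh G 2 0 0 m = 0" "sh K 0 0 2 m = 0"
      using that unfolding supp_in_def by blast+
    then show ?thesis unfolding g_def by simp
  qed
  have "g m = 0" using inbox outbox by blast
  then show ?thesis unfolding g_def F_def G_def K_def .
qed

lemma eq2:
  assumes supp: "supp_in N p"
    and H: "\<And>x y z. x \<noteq> 0 \<Longrightarrow> z \<noteq> 0 \<Longrightarrow> H2 p x y z = 0"
  shows "sh (wt (\<lambda>i j k. of_nat i * (of_nat i + of_nat k + 1)) p) 0 0 2 m
       + sh (wt (\<lambda>i j k. of_nat k * (of_nat i + of_nat k + 1)) p) 2 0 0 m
       - sh (wt (\<lambda>i j k. of_nat i * of_nat k) p) 0 2 0 m = 0"
proof -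
  define F where "F = wt (\<lambda>i j k. of_nat i * (of_nat i + of_nat k + 1)) p"
  define G where "G = wt (\<lambda>i j k. of_nat k * (of_nat i + of_nat k + 1)) p"
  define K where "K = wt (\<lambda>i j k. of_nat i * of_nat k) p"
  define g where "g = (\<lambda>m. sh F 0 0 2 m + sh G 2 0 0 m - sh K 0 2 0 m)"
  have sF: "supp_in (N+2) F" "supp_in (N+2) G" "supp_in (N+2) K"
    unfolding F_def G_def K_def using supp_wt supp_mono supp by (meson le_add1)+
  have key: "ev (N+4) g x y z = 0" if x: "x \<noteq> 0" and z: "z \<noteq> 0" for x y z
  proof -
    let ?A = "eval3 (d12 (d12 p)) x y z" and ?B = "eval3 (d23 (d23 p)) x y z"
      and ?C = "eval3 (d12 (d23 p)) x y z" and ?D = "eval3 (d12 p) x y z"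
      and ?E = "eval3 (d23 p) x y z"
    have e: "x^2 * z^2 * H2 p x y z = z^2 * (x^2 * ?A) + x^2 * (z^2 * ?B)
       + (x^2 + z^2 - y^2) * (x * z * ?C) + 2 * z^2 * (x * ?D) + 2 * x^2 * (z * ?E)"
      using x z unfolding H2_def by (simp add: field_simps power2_eq_square)
    have sd: "supp_in N (d12 (d12 p))" "supp_in N (d23 (d23 p))" "supp_in N (d12 (d23 p))"
      "supp_in N (d12 p)" "supp_in N (d23 p)"
      using supp by (simp_all add: supp_d12 supp_d23)
    have A: "x^2 * ?A = ev (N+2) (wt (\<lambda>i j k. of_nat i * (of_nat i - 1)) p) x y z"
      using ev_shift[OF sd(1), of 2 "N+2" 0 0 x y z] unfolding sh_d12d12 eval3_ev[OF sd(1)] by simp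
    have B: "z^2 * ?B = ev (N+2) (wt (\<lambda>i j k. of_nat k * (of_nat k - 1)) p) x y z"
      using ev_shift[OF sd(2), of 0 "N+2" 0 2 x y z] unfolding sh_d23d23 eval3_ev[OF sd(2)] by simp
    have C: "x * z * ?C = ev (N+2) (wt (\<lambda>i j k. of_nat i * of_nat k) p) x y z"
      using ev_shift[OF sd(3), of 1 "N+2" 0 1 x y z] unfolding sh_d12d23 eval3_ev[OF sd(3)] by simp
    have D: "x * ?D = ev (N+2) (wt (\<lambda>i j k. of_nat i) p) x y z"
      using ev_shift[OF sd(4), of 1 "N+2" 0 0 x y z] unfolding sh_d12 eval3_ev[OF sd(4)] by simp
    have E: "z * ?E = ev (N+2) (wt (\<lambda>i j k. of_nat k) p) x y z"
      using ev_shift[OF sd(5), of 0 "N+2" 0 1 x y z] unfolding sh_d23 eval3_ev[OF sd(5)] by simp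
    have F: "ev (N+2) F x y z = x^2 * ?A + x * z * ?C + 2 * (x * ?D)"
    proof -
      have "F = wt (\<lambda>i j k. of_nat i * (of_nat i - 1) + of_nat i * of_nat k + 2 * of_nat i) p"
        unfolding F_def by (rule arg_cong[where f="\<lambda>w. wt w p"]) (auto simp: fun_eq_iff algebra_simps)
      then show ?thesis using A C D by (simp add: ev_wt_lin)
    qed
    have G: "ev (N+2) G x y z = z^2 * ?B + x * z * ?C + 2 * (z * ?E)"
    proof -
      have "G = wt (\<lambda>i j k. of_nat k * (of_nat k - 1) + of_nat i * of_nat k + 2 * of_nat k) p"
        unfolding G_def by (rule arg_cong[where f="\<lambda>w. wt w p"]) (auto simp: fun_eq_iff algebra_simps)
      then show ?thesis using B C E by (simp add: ev_wt_lin)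
    qed
    have K: "ev (N+2) K x y z = x * z * ?C" using C by (simp add: K_def)
    have "ev (N+4) g x y z = ev (N+4) (sh F 0 0 2) x y z + ev (N+4) (sh G 2 0 0) x y z
        - ev (N+4) (sh K 0 2 0) x y z"
      unfolding g_def by (rule ev_combo)
    also have "\<dots> = z^2 * ev (N+2) F x y z + x^2 * ev (N+2) G x y z - y^2 * ev (N+2) K x y z"
      using ev_shift[OF sF(1), of 0 "N+4" 0 2 x y z] ev_shift[OF sF(2), of 2 "N+4" 0 0 x y z]
        ev_shift[OF sF(3), of 0 "N+4" 2 0 x y z] by simp
    also have "\<dots> = x^2 * z^2 * H2 p x y z"
      unfolding e F G K by (simp add: algebra_simps)
    also have "\<dots> = 0" using H x z by simp
    finally show ?thesis .
  qed
  have inbox: "\<forall>m\<in>box (N+4). g m = 0"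
    by (rule ev_ident) (use key in auto)
  have outbox: "g m = 0" if "m \<notin> box (N+4)" for m
  proof -
    have n4: "N + 2 + 2 = N + 4" by simp
    have s4: "supp_in (N+4) (sh F 0 0 2)" "supp_in (N+4) (sh G 2 0 0)" "supp_in (N+4) (sh K 0 2 0)"
      using supp_sh[OF sF(1), of 0 0 2] supp_sh[OF sF(2), of 2 0 0] supp_sh[OF sF(3), of 0 2 0]
      unfolding n4 by simp_all
    then have "sh F 0 0 2 m = 0" "sh G 2 0 0 m = 0" "sh K 0 2 0 m = 0"
      using that unfolding supp_in_def by blast+
    then show ?thesis unfolding g_def by simp
  qed
  have "g m = 0" using inbox outbox by blast
  then show ?thesis unfolding g_def F_def G_def K_def .
qed

lemma eq3:
  assumes supp: "supp_in N p"
    and H: "\<And>x y z. y \<noteq> 0 \<Longrightarrow> z \<noteq> 0 \<Longrightarrow> H3 p x y z = 0"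
  shows "sh (wt (\<lambda>i j k. of_nat j * (of_nat j + of_nat k + 1)) p) 0 0 2 m
       + sh (wt (\<lambda>i j k. of_nat k * (of_nat j + of_nat k + 1)) p) 0 2 0 m
       - sh (wt (\<lambda>i j k. of_nat j * of_nat k) p) 2 0 0 m = 0"
proof -
  define F where "F = wt (\<lambda>i j k. of_nat j * (of_nat j + of_nat k + 1)) p"
  define G where "G = wt (\<lambda>i j k. of_nat k * (of_nat j + of_nat k + 1)) p"
  define K where "K = wt (\<lambda>i j k. of_nat j * of_nat k) p"
  define g where "g = (\<lambda>m. sh F 0 0 2 m + sh G 0 2 0 m - sh K 2 0 0 m)"
  have sF: "supp_in (N+2) F" "supp_in (N+2) G" "supp_in (N+2) K"
    unfolding F_def G_def K_def using supp_wt supp_mono supp by (meson le_add1)+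
  have key: "ev (N+4) g x y z = 0" if y: "y \<noteq> 0" and z: "z \<noteq> 0" for x y z
  proof -
    let ?A = "eval3 (d13 (d13 p)) x y z" and ?B = "eval3 (d23 (d23 p)) x y z"
      and ?C = "eval3 (d13 (d23 p)) x y z" and ?D = "eval3 (d13 p) x y z"
      and ?E = "eval3 (d23 p) x y z"
    have e: "y^2 * z^2 * H3 p x y z = z^2 * (y^2 * ?A) + y^2 * (z^2 * ?B)
       + (y^2 + z^2 - x^2) * (y * z * ?C) + 2 * z^2 * (y * ?D) + 2 * y^2 * (z * ?E)"
      using y z unfolding H3_def by (simp add: field_simps power2_eq_square)
    have sd: "supp_in N (d13 (d13 p))" "supp_in N (d23 (d23 p))" "supp_in N (d13 (d23 p))"
      "supp_in N (d13 p)" "supp_in N (d23 p)"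
      using supp by (simp_all add: supp_d13 supp_d23)
    have A: "y^2 * ?A = ev (N+2) (wt (\<lambda>i j k. of_nat j * (of_nat j - 1)) p) x y z"
      using ev_shift[OF sd(1), of 0 "N+2" 2 0 x y z] unfolding sh_d13d13 eval3_ev[OF sd(1)] by simp
    have B: "z^2 * ?B = ev (N+2) (wt (\<lambda>i j k. of_nat k * (of_nat k - 1)) p) x y z"
      using ev_shift[OF sd(2), of 0 "N+2" 0 2 x y z] unfolding sh_d23d23 eval3_ev[OF sd(2)] by simp
    have C: "y * z * ?C = ev (N+2) (wt (\<lambda>i j k. of_nat j * of_nat k) p) x y z"
      using ev_shift[OF sd(3), of 0 "N+2" 1 1 x y z] unfolding sh_d13d23 eval3_ev[OF sd(3)] by simp
    have D: "y * ?D = ev (N+2) (wt (\<lambda>i j k. of_nat j) p) x y z"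
      using ev_shift[OF sd(4), of 0 "N+2" 1 0 x y z] unfolding sh_d13 eval3_ev[OF sd(4)] by simp
    have E: "z * ?E = ev (N+2) (wt (\<lambda>i j k. of_nat k) p) x y z"
      using ev_shift[OF sd(5), of 0 "N+2" 0 1 x y z] unfolding sh_d23 eval3_ev[OF sd(5)] by simp
    have F: "ev (N+2) F x y z = y^2 * ?A + y * z * ?C + 2 * (y * ?D)"
    proof -
      have "F = wt (\<lambda>i j k. of_nat j * (of_nat j - 1) + of_nat j * of_nat k + 2 * of_nat j) p"
        unfolding F_def by (rule arg_cong[where f="\<lambda>w. wt w p"]) (auto simp: fun_eq_iff algebra_simps)
      then show ?thesis using A C D by (simp add: ev_wt_lin)
    qed
    have G: "ev (N+2) G x y z = z^2 * ?B + y * z * ?C + 2 * (z * ?E)"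
    proof -
      have "G = wt (\<lambda>i j k. of_nat k * (of_nat k - 1) + of_nat j * of_nat k + 2 * of_nat k) p"
        unfolding G_def by (rule arg_cong[where f="\<lambda>w. wt w p"]) (auto simp: fun_eq_iff algebra_simps)
      then show ?thesis using B C E by (simp add: ev_wt_lin)
    qed
    have K: "ev (N+2) K x y z = y * z * ?C" using C by (simp add: K_def)
    have "ev (N+4) g x y z = ev (N+4) (sh F 0 0 2) x y z + ev (N+4) (sh G 0 2 0) x y z
        - ev (N+4) (sh K 2 0 0) x y z"
      unfolding g_def by (rule ev_combo)
    also have "\<dots> = z^2 * ev (N+2) F x y z + y^2 * ev (N+2) G x y z - x^2 * ev (N+2) K x y z"
      using ev_shift[OF sF(1), of 0 "N+4" 0 2 x y z] ev_shift[OF sF(2), of 0 "N+4" 2 0 x y z]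
        ev_shift[OF sF(3), of 2 "N+4" 0 0 x y z] by simp
    also have "\<dots> = y^2 * z^2 * H3 p x y z"
      unfolding e F G K by (simp add: algebra_simps)
    also have "\<dots> = 0" using H y z by simp
    finally show ?thesis .
  qed
  have inbox: "\<forall>m\<in>box (N+4). g m = 0"
    by (rule ev_ident) (use key in auto)
  have outbox: "g m = 0" if "m \<notin> box (N+4)" for m
  proof -
    have n4: "N + 2 + 2 = N + 4" by simp
    have s4: "supp_in (N+4) (sh F 0 0 2)" "supp_in (N+4) (sh G 0 2 0)" "supp_in (N+4) (sh K 2 0 0)"
      using supp_sh[OF sF(1), of 0 0 2] supp_sh[OF sF(2), of 0 2 0] supp_sh[OF sF(3), of 2 0 0]
      unfolding n4 by simp_all
    then have "sh F 0 0 2 m = 0" "sh G 0 2 0 m = 0" "sh K 2 0 0 m = 0"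
      using that unfolding supp_in_def by blast+
    then show ?thesis unfolding g_def by simp
  qed
  have "g m = 0" using inbox outbox by blast
  then show ?thesis unfolding g_def F_def G_def K_def .
qed



lemma comb:
  fixes Q :: mpoly3
  assumes E1: "\<And>m. sh (wt (\<lambda>i j k. of_nat i * (of_nat i + of_nat j + 1)) Q) 0 2 0 m
       + sh (wt (\<lambda>i j k. of_nat j * (of_nat i + of_nat j + 1)) Q) 2 0 0 m
       - sh (wt (\<lambda>i j k. of_nat i * of_nat j) Q) 0 0 2 m = 0"
  and E2: "\<And>m. sh (wt (\<lambda>i j k. of_nat i * (of_nat i + of_nat k + 1)) Q) 0 0 2 m
       + sh (wt (\<lambda>i j k. of_nat k * (of_nat i + of_nat k + 1)) Q) 2 0 0 m
       - sh (wt (\<lambda>i j k. of_nat i * of_nat k) Q) 0 2 0 m = 0"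
  and E3: "\<And>m. sh (wt (\<lambda>i j k. of_nat j * (of_nat j + of_nat k + 1)) Q) 0 0 2 m
       + sh (wt (\<lambda>i j k. of_nat k * (of_nat j + of_nat k + 1)) Q) 0 2 0 m
       - sh (wt (\<lambda>i j k. of_nat j * of_nat k) Q) 2 0 0 m = 0"
  and Q0: "Q (0,0,0) = 0"
  shows "Q (i,j,k) = 0"
proof -
  have corner: "Q (d,0,0) = 0" for d
  proof -
    have "d = 0 \<or> d = 1 \<or> d = (d - 2) + 2" by arith
    then consider "d = 0" | "d = 1" | e where "d = e + 2" by blast
    then show ?thesis
    proof cases
      case 1 then show ?thesis using Q0 by simp
    next
      case 2
      have "2 * Q (1,0,0) = 0" using E1[of "(1,2,0)"] by (simp add: sh_def wt_def)
      then show ?thesis using 2 by simp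
    next
      case 3
      define t where "t = Q (e+2,0,0)"
      have h1: "(of_nat e + 2) * (of_nat e + 3) * t + 2 * (of_nat e + 3) * Q (e,2,0) = 0"
        using E1[of "(e+2,2,0)"] by (simp add: sh_def wt_def t_def algebra_simps)
      have h2: "(of_nat e + 2) * (of_nat e + 3) * t + 2 * (of_nat e + 3) * Q (e,0,2) = 0"
        using E2[of "(e+2,0,2)"] by (simp add: sh_def wt_def t_def algebra_simps)
      have ne3: "(of_nat e + 3 :: complex) \<noteq> 0"
        by (metis add_is_0 of_nat_add of_nat_eq_0_iff of_nat_numeral zero_neq_numeral)
      have ne2: "(of_nat e + 2 :: complex) \<noteq> 0"
        by (metis add_is_0 of_nat_add of_nat_eq_0_iff of_nat_numeral zero_neq_numeral)
      have "(of_nat e + 3) * ((of_nat e + 2) * t + 2 * Q (e,2,0)) = 0"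
        using h1 by (simp add: algebra_simps)
      then have "(of_nat e + 2) * t + 2 * Q (e,2,0) = 0" using ne3 by simp
      then have u: "2 * Q (e,2,0) = - ((of_nat e + 2) * t)" by (simp add: eq_neg_iff_add_eq_0 add.commute)
      have "(of_nat e + 3) * ((of_nat e + 2) * t + 2 * Q (e,0,2)) = 0"
        using h2 by (simp add: algebra_simps)
      then have "(of_nat e + 2) * t + 2 * Q (e,0,2) = 0" using ne3 by simp
      then have w: "2 * Q (e,0,2) = - ((of_nat e + 2) * t)" by (simp add: eq_neg_iff_add_eq_0 add.commute)
      show ?thesis
      proof (cases "e < 2")
        case True
        have h3: "6 * Q (e,2,0) + 6 * Q (e,0,2) = 0"
          using E3[of "(e,2,2)"] True by (simp add: sh_def wt_def algebra_simps)
        then have "3 * (2 * Q (e,2,0)) + 3 * (2 * Q (e,0,2)) = 0" by simp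
        then have "(of_nat e + 2) * t = 0" unfolding u w by (simp add: disj_commute)
        then show ?thesis using ne2 3 t_def by simp
      next
        case False
        then have "e = (e - 2) + 2" by arith
        then obtain f where f: "e = f + 2" by blast
        have h3: "6 * Q (e,2,0) + 6 * Q (e,0,2) - 4 * Q (f,2,2) = 0"
          using E3[of "(e,2,2)"] f by (simp add: sh_def wt_def algebra_simps)
        have h4: "(of_nat f + 2) * (of_nat f + 3) * Q (e,2,0) + 2 * (of_nat f + 3) * Q (f,2,2)
                  - 2 * (of_nat f + 2) * Q (e,0,2) = 0"
          using E2[of "(e,2,2)"] f by (simp add: sh_def wt_def algebra_simps)
        have "(of_nat f + 4) * (of_nat f + 5) * Q (e,2,0) = 0"
        proof -
          have "2 * Q (e,0,2) = 2 * Q (e,2,0)" using u w by simp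
          then have uw: "Q (e,0,2) = Q (e,2,0)" by simp
          have v: "2 * Q (f,2,2) = 6 * Q (e,2,0)" using h3 uw by (simp add: algebra_simps)
          have "(of_nat f + 2) * (of_nat f + 3) * Q (e,2,0) + (of_nat f + 3) * (6 * Q (e,2,0))
                  - 2 * (of_nat f + 2) * Q (e,2,0) = 0"
            using h4 uw v by (simp add: algebra_simps)
          then show ?thesis by (simp add: algebra_simps)
        qed
        moreover have "(of_nat f + 4 :: complex) \<noteq> 0" "(of_nat f + 5 :: complex) \<noteq> 0"
          by (metis add_is_0 of_nat_add of_nat_eq_0_iff of_nat_numeral zero_neq_numeral)+
        ultimately have "Q (e,2,0) = 0" by simp
        then have "(of_nat e + 2) * t = 0" using u by simp
        then show ?thesis using ne2 3 t_def by simp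
      qed
    qed
  qed
  have level0: "\<forall>a. Q (a,b,0) = 0" for b
  proof (induction b rule: less_induct)
    case (less b)
    have "b = 0 \<or> b = 1 \<or> b = (b - 2) + 2" by arith
    then consider "b = 0" | "b = 1" | c where "b = c + 2" by blast
    then show ?case
    proof cases
      case 1 then show ?thesis using corner by simp
    next
      case 2
      show ?thesis
      proof
        fix a
        have "(of_nat a + 2) * Q (a,1,0) = 0"
          using E1[of "(a+2,1,0)"] by (simp add: sh_def wt_def algebra_simps)
        moreover have "(of_nat a + 2 :: complex) \<noteq> 0"
          by (metis add_is_0 of_nat_add of_nat_eq_0_iff of_nat_numeral zero_neq_numeral)
        ultimately show "Q (a,b,0) = 0" using 2 by simp
      qed
    next
      case 3
      show ?thesis
      proof
        fix a
        have ih: "Q (a+2,c,0) = 0" using less 3 by simp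
        have "(of_nat a + 2) * (of_nat a + of_nat c + 3) * Q (a+2,c,0)
              + (of_nat c + 2) * (of_nat a + of_nat c + 3) * Q (a,c+2,0) = 0"
          using E1[of "(a+2,c+2,0)"] by (simp add: sh_def wt_def algebra_simps)
        then have "(of_nat c + 2) * (of_nat a + of_nat c + 3) * Q (a,c+2,0) = 0"
          using ih by simp
        moreover have "(of_nat c + 2 :: complex) \<noteq> 0" "(of_nat a + of_nat c + 3 :: complex) \<noteq> 0"
          by (metis add_is_0 of_nat_add of_nat_eq_0_iff of_nat_numeral zero_neq_numeral)+
        ultimately show "Q (a,b,0) = 0" using 3 by simp
      qed
    qed
  qed
  have all: "\<forall>a b. Q (a,b,k) = 0" for k
  proof (induction k rule: less_induct)
    case (less k)
    note outerIH = less.IH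
    show ?case
    proof (cases "k = 0")
      case True then show ?thesis using level0 by simp
    next
      case kpos: False
      have "\<forall>a. Q (a,b,k) = 0" for b
      proof (induction b rule: less_induct)
        case (less b)
        show ?case
        proof
          fix a
          have t1: "sh (wt (\<lambda>i j k. of_nat i * (of_nat i + of_nat k + 1)) Q) 0 0 2 (a+2,b,k) = 0"
          proof (cases "2 \<le> k")
            case True
            then have "Q (a+2,b,k-2) = 0" using outerIH[of "k-2"] kpos by simp
            then show ?thesis using True by (simp add: sh_def wt_def)
          qed (simp add: sh_def)
          have t3: "sh (wt (\<lambda>i j k. of_nat i * of_nat k) Q) 0 2 0 (a+2,b,k) = 0"
          proof (cases "2 \<le> b")
            case True
            then have "Q (a+2,b-2,k) = 0" using less.IH by simp
            then show ?thesis using True by (simp add: sh_def wt_def)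
          qed (simp add: sh_def)
          have "sh (wt (\<lambda>i j k. of_nat k * (of_nat i + of_nat k + 1)) Q) 2 0 0 (a+2,b,k) = 0"
            using E2[of "(a+2,b,k)"] t1 t3 by simp
          then have "of_nat k * (of_nat a + of_nat k + 1) * Q (a,b,k) = 0"
            by (simp add: sh_def wt_def)
          moreover have "(of_nat k :: complex) \<noteq> 0" using kpos by simp
          moreover have "(of_nat a + of_nat k + 1 :: complex) \<noteq> 0"
            by (metis add_is_0 of_nat_add of_nat_eq_0_iff of_nat_1 one_neq_zero)
          ultimately show "Q (a,b,k) = 0" by simp
        qed
      qed
      then show ?thesis by blast
    qed
  qed
  show ?thesis using all by blast
qed



lemma poly_supp: assumes "is_poly3 p" obtains N where "supp_in N p"
proof -
  let ?S = "{m. p m \<noteq> 0}"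
  let ?B = "fst ` ?S \<union> fst ` snd ` ?S \<union> snd ` snd ` ?S"
  have fin: "finite ?B" using assms unfolding is_poly3_def by simp
  have "supp_in (Max ?B) p"
    unfolding supp_in_def box_def
  proof (intro allI impI)
    fix m assume m: "p m \<noteq> 0"
    obtain i j k where mi: "m = (i,j,k)" by (cases m) auto
    have "i \<in> ?B" "j \<in> ?B" "k \<in> ?B" using m mi by (force simp: image_iff)+
    then show "m \<in> {..Max ?B} \<times> {..Max ?B} \<times> {..Max ?B}" using fin mi by auto
  qed
  then show ?thesis using that by blast
qed

theorem mainTheorem8:
  fixes p :: mpoly3
  assumes "is_poly3 p"
    and "\<And>x12 x13 x23. x12 \<noteq> 0 \<Longrightarrow> x13 \<noteq> 0 \<Longrightarrow> H1 p x12 x13 x23 = 0"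
    and "\<And>x12 x13 x23. x12 \<noteq> 0 \<Longrightarrow> x23 \<noteq> 0 \<Longrightarrow> H2 p x12 x13 x23 = 0"
    and "\<And>x12 x13 x23. x13 \<noteq> 0 \<Longrightarrow> x23 \<noteq> 0 \<Longrightarrow> H3 p x12 x13 x23 = 0"
  shows "is_const3 p"
proof -
  obtain N where supp: "supp_in N p" using poly_supp[OF assms(1)] by blast
  define Q where "Q = p((0,0,0) := 0)"
  have suppQ: "supp_in N Q" using supp unfolding supp_in_def Q_def by auto
  have d: "d12 Q = d12 p" "d13 Q = d13 p" "d23 Q = d23 p"
    by (rule ext, auto simp: Q_def d12_def d13_def d23_def split: prod.splits)+
  have H: "H1 Q = H1 p" "H2 Q = H2 p" "H3 Q = H3 p"
    by (simp_all add: fun_eq_iff H1_def H2_def H3_def d)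
  have Q0: "Q (0,0,0) = 0" by (simp add: Q_def)
  have "Q (i,j,k) = 0" for i j k
  proof (rule comb)
    show "Q (0,0,0) = 0" by (rule Q0)
    show "\<And>m. sh (wt (\<lambda>i j k. of_nat i * (of_nat i + of_nat j + 1)) Q) 0 2 0 m
       + sh (wt (\<lambda>i j k. of_nat j * (of_nat i + of_nat j + 1)) Q) 2 0 0 m
       - sh (wt (\<lambda>i j k. of_nat i * of_nat j) Q) 0 0 2 m = 0"
      by (rule eq1[OF suppQ]) (use assms(2) H in simp)
    show "\<And>m. sh (wt (\<lambda>i j k. of_nat i * (of_nat i + of_nat k + 1)) Q) 0 0 2 m
       + sh (wt (\<lambda>i j k. of_nat k * (of_nat i + of_nat k + 1)) Q) 2 0 0 m
       - sh (wt (\<lambda>i j k. of_nat i * of_nat k) Q) 0 2 0 m = 0"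
      by (rule eq2[OF suppQ]) (use assms(3) H in simp)
    show "\<And>m. sh (wt (\<lambda>i j k. of_nat j * (of_nat j + of_nat k + 1)) Q) 0 0 2 m
       + sh (wt (\<lambda>i j k. of_nat k * (of_nat j + of_nat k + 1)) Q) 0 2 0 m
       - sh (wt (\<lambda>i j k. of_nat j * of_nat k) Q) 2 0 0 m = 0"
      by (rule eq3[OF suppQ]) (use assms(4) H in simp)
  qed
  then show ?thesis unfolding is_const3_def Q_def
    by (metis fun_upd_other prod_cases3)
qed

end
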